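(* Let $S$ be a set of $9$ points of $PG(3,2)$ which is a strong blocking set, i.e. for every plane $\sigma$ of $PG(3,2)$ the points of $\sigma\cap S$ span $\sigma$. Then through each point $P\in S$ there pass exactly $2$ lines of $PG(3,2)$ entirely contained in $S$.
   Context: $PG(3,2)$ is the $3$-dimensional projective space over $\mathbb{F}_2$ (15 points, each line has 3 points, each plane has 7 points). A strong blocking set in $PG(3,2)$ is a set of points $S$ such that for every plane $\sigma$, the span $\langle \sigma\cap S\rangle$ equals $\sigma$. A strong blocking set of size $9$ (the minimum possible size) is called a minimal strong blocking set. *)

theory Defs
  imports Main
begin

text \<open>PG(3,2): points are the nonzero vectors of the vector space F_2^4,
  represented as 4-tuples of booleans (False = 0, True = 1, addition = xor).\<close>

type_synonym vec = "bool \<times> bool \<times> bool \<times> bool"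

fun vadd :: "vec \<Rightarrow> vec \<Rightarrow> vec" where
  "vadd (a, b, c, d) (e, f, g, h) = (a \<noteq> e, b \<noteq> f, c \<noteq> g, d \<noteq> h)"

definition vzero :: vec where
  "vzero = (False, False, False, False)"

fun vdot :: "vec \<Rightarrow> vec \<Rightarrow> bool" where
  "vdot (a, b, c, d) (e, f, g, h) =
     (((a \<and> e) \<noteq> (b \<and> f)) \<noteq> ((c \<and> g) \<noteq> (d \<and> h)))"

definition pg_points :: "vec set" where
  "pg_points = UNIV - {vzero}"

definition is_line :: "vec set \<Rightarrow> bool" where
  "is_line L \<longleftrightarrow> (\<exists>a b. a \<noteq> vzero \<and> b \<noteq> vzero \<and> a \<noteq> b \<and> L = {a, b, vadd a b})"

text \<open>Planes: the nonzero vectors of a 3-dimensional subspace, i.e. the kernel of a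
  nonzero linear form.\<close>
definition is_plane :: "vec set \<Rightarrow> bool" where
  "is_plane \<sigma> \<longleftrightarrow> (\<exists>u. u \<noteq> vzero \<and> \<sigma> = {p. p \<noteq> vzero \<and> \<not> vdot u p})"

inductive_set lspan :: "vec set \<Rightarrow> vec set" for X :: "vec set" where
  zero: "vzero \<in> lspan X"
| base: "x \<in> X \<Longrightarrow> x \<in> lspan X"
| add: "x \<in> lspan X \<Longrightarrow> y \<in> lspan X \<Longrightarrow> vadd x y \<in> lspan X"

definition pspan :: "vec set \<Rightarrow> vec set" where
  "pspan X = lspan X - {vzero}"

definition strong_blocking_set :: "vec set \<Rightarrow> bool" where
  "strong_blocking_set S \<longleftrightarrow> S \<subseteq> pg_points \<and>
     (\<forall>\<sigma>. is_plane \<sigma> \<longrightarrow> pspan (\<sigma> \<inter> S) = \<sigma>)"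

end

theory Submission
  imports Defs
begin


lemma vadd_comm: "vadd x y = vadd y x"
  by (cases x; cases y) auto
lemma vadd_assoc: "vadd (vadd x y) z = vadd x (vadd y z)"
  by (cases x; cases y; cases z) auto
lemma vadd_lcomm: "vadd x (vadd y z) = vadd y (vadd x z)"
  by (cases x; cases y; cases z) auto
lemma vadd_self[simp]: "vadd x x = vzero"
  by (cases x) (auto simp: vzero_def)
lemma vadd_self2[simp]: "vadd x (vadd x y) = y"
  by (cases x; cases y) auto
lemma vadd_zero[simp]: "vadd x vzero = x" "vadd vzero x = x"
  by (cases x; simp add: vzero_def)+
lemma vadd_eq_zero[simp]: "(vadd x y = vzero) = (x = y)"
  by (cases x; cases y) (auto simp: vzero_def)
lemma vadd_cancel[simp]: "(vadd x y = vadd x z) = (y = z)"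
  by (cases x; cases y; cases z) auto
lemma vadd_eq_left[simp]: "(vadd x y = x) = (y = vzero)" "(vadd y x = x) = (y = vzero)"
  by (cases x; cases y; auto simp: vzero_def)+
lemma vdot_add: "vdot (vadd u v) x = (vdot u x \<noteq> vdot v x)"
  by (cases x; cases u; cases v) auto
lemma vdot_add2: "vdot u (vadd x y) = (vdot u x \<noteq> vdot u y)"
  by (cases x; cases u; cases y) auto
lemma vdot_zero[simp]: "\<not> vdot u vzero"
  by (cases u) (auto simp: vzero_def)
lemma ex_nonorth: "u \<noteq> vzero \<Longrightarrow> \<exists>v. vdot u v"
  by (cases u) (auto simp: vzero_def split_paired_Ex)

lemma card_vec: "card (UNIV :: vec set) = 16"
  by (simp add: UNIV_Times_UNIV[symmetric] card_cartesian_product del: UNIV_Times_UNIV)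
lemma card_b3: "card (UNIV :: (bool \<times> bool \<times> bool) set) = 8"
  by (simp add: UNIV_Times_UNIV[symmetric] card_cartesian_product del: UNIV_Times_UNIV)



lemmas vac = vadd_assoc vadd_comm vadd_lcomm

lemma vadd_cancel2[simp]: "(vadd y x = vadd z x) = (y = z)" "(vadd x y = vadd z x) = (y = z)"
   "(vadd y x = vadd x z) = (y = z)"
  by (metis vadd_cancel vadd_comm)+
lemma vadd_eq_left2[simp]: "(x = vadd x y) = (y = vzero)" "(x = vadd y x) = (y = vzero)"
  by (metis vadd_eq_left)+

lemma ex_orth: "\<exists>u. u \<noteq> vzero \<and> \<not> vdot u a \<and> \<not> vdot u b \<and> \<not> vdot u c"
proof -
  let ?f = "\<lambda>u. (vdot u a, vdot u b, vdot u c)"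
  have "\<not> inj ?f"
  proof
    assume "inj ?f"
    then have "card (UNIV :: vec set) \<le> card (UNIV :: (bool \<times> bool \<times> bool) set)"
      by (intro card_inj_on_le) auto
    then show False by (simp add: card_vec card_b3)
  qed
  then obtain u v where "u \<noteq> v" "?f u = ?f v" unfolding inj_def by blast
  then show ?thesis by (intro exI[of _ "vadd u v"]) (auto simp: vdot_add)
qed

lemma card_orth_le: assumes "u \<noteq> vzero" shows "card {p. \<not> vdot u p} \<le> 8"
proof -
  obtain v where v: "vdot u v" using ex_nonorth[OF assms] by blast
  let ?Z = "{p. \<not> vdot u p}"
  have "card ?Z \<le> card (- ?Z)"
    by (rule card_inj_on_le[where f = "vadd v"]) (auto simp: inj_on_def vdot_add2 v)
  moreover have "card ?Z + card (- ?Z) = 16"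
    using card_Un_disjoint[of ?Z "- ?Z"] by (simp add: card_vec Compl_partition)
  ultimately show ?thesis by linarith
qed

lemma plane_points:
  assumes "u \<noteq> vzero" "a \<noteq> vzero" "b \<noteq> vzero" "c \<noteq> vzero" "a \<noteq> b" "a \<noteq> c" "b \<noteq> c"
    "c \<noteq> vadd a b" "\<not> vdot u a" "\<not> vdot u b" "\<not> vdot u c"
  shows "{p. \<not> vdot u p} = {vzero, a, b, c, vadd a b, vadd a c, vadd b c, vadd a (vadd b c)}"
proof -
  let ?E = "{vzero, a, b, c, vadd a b, vadd a c, vadd b c, vadd a (vadd b c)}"
  have sub: "?E \<subseteq> {p. \<not> vdot u p}" using assms by (auto simp: vdot_add2)
  have "card ?E = 8" using assms proof -
    have h: "vadd a b \<noteq> c" "a \<noteq> vadd b c" "vadd b c \<noteq> a" "b \<noteq> vadd a c" "vadd a c \<noteq> b"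
      "c \<noteq> vadd a b" using assms(8) by (metis vac vadd_self2)+
    have h2: "vzero \<noteq> vadd a (vadd b c)" "vzero \<noteq> vadd b c" "vzero \<noteq> vadd a c" "vzero \<noteq> vadd a b"
      "c \<noteq> vadd a (vadd b c)" "b \<noteq> vadd a (vadd b c)" "a \<noteq> vadd a (vadd b c)"
      using assms(2-8) by (metis vac vadd_self2 vadd_eq_zero vadd_zero)+
    show ?thesis using assms h h2 by (simp add: vac card_insert_if)
  qed
  then show ?thesis using sub card_orth_le[OF assms(1)]
    by (metis (no_types) card_seteq finite)
qed

lemma lspan_line: "X \<subseteq> {x, y, vadd x y} \<Longrightarrow> lspan X \<subseteq> {vzero, x, y, vadd x y}"
proof
  fix z assume X: "X \<subseteq> {x, y, vadd x y}" and "z \<in> lspan X"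
  from \<open>z \<in> lspan X\<close> show "z \<in> {vzero, x, y, vadd x y}"
  proof (induction rule: lspan.induct)
    case zero then show ?case by simp
  next
    case (base z) then show ?case using X by blast
  next
    case (add p q) then show ?case by (elim insertE emptyE; simp add: vac)
  qed
qed



lemma sidon:
  assumes sb: "strong_blocking_set S"
    and nS: "a \<notin> S" "b \<notin> S" "c \<notin> S" "d \<notin> S"
    and nz: "a \<noteq> vzero" "b \<noteq> vzero" "c \<noteq> vzero" "d \<noteq> vzero"
    and ds: "a \<noteq> b" "a \<noteq> c" "a \<noteq> d" "b \<noteq> c" "b \<noteq> d" "c \<noteq> d"
    and eq: "vadd a b = vadd c d"
  shows False
proof -
  have d: "d = vadd a (vadd b c)" using eq by (metis vac vadd_self2)
  have cab: "c \<noteq> vadd a b" using d nz(4) by (metis vac vadd_self2 vadd_self)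
  obtain u where u: "u \<noteq> vzero" "\<not> vdot u a" "\<not> vdot u b" "\<not> vdot u c"
    using ex_orth[of a b c] by blast
  let ?\<sigma> = "{p. p \<noteq> vzero \<and> \<not> vdot u p}"
  have "is_plane ?\<sigma>" unfolding is_plane_def using u(1) by blast
  then have ps: "pspan (?\<sigma> \<inter> S) = ?\<sigma>" using sb unfolding strong_blocking_set_def by blast
  have pp: "{p. \<not> vdot u p} = {vzero, a, b, c, vadd a b, vadd a c, vadd b c, vadd a (vadd b c)}"
    using plane_points[OF u(1) nz(1-3) ds(1,2,4) cab u(2-4)] .
  have e: "vadd (vadd a b) (vadd a c) = vadd b c" by (metis vac vadd_self2)
  have "?\<sigma> \<inter> S \<subseteq> {vadd a b, vadd a c, vadd (vadd a b) (vadd a c)}"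
  proof
    fix p assume p: "p \<in> ?\<sigma> \<inter> S"
    then have "p \<in> {p. \<not> vdot u p}" by simp
    then have "p \<in> {vzero, a, b, c, vadd a b, vadd a c, vadd b c, vadd a (vadd b c)}"
      using pp by simp
    then show "p \<in> {vadd a b, vadd a c, vadd (vadd a b) (vadd a c)}"
      using p nS d e by auto
  qed
  then have "lspan (?\<sigma> \<inter> S) \<subseteq> {vzero, vadd a b, vadd a c, vadd (vadd a b) (vadd a c)}"
    by (rule lspan_line)
  moreover have "a \<in> lspan (?\<sigma> \<inter> S)" using ps u nz unfolding pspan_def by blast
  ultimately have "a \<in> {vzero, vadd a b, vadd a c, vadd b c}" using e by auto
  then show False using nz ds cab by (auto, metis vac vadd_self2)
qed



lemma card2: "card {a, b} \<le> 2"
  by (cases "a = b") simp_all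

lemma card_pg: "card pg_points = 15"
  unfolding pg_points_def by (simp add: card_vec)

lemma img_iff: "(x \<in> vadd P ` T) = (vadd P x \<in> T)"
  by (metis image_eqI image_iff vadd_self2)

theorem lemma2p2:
  fixes S :: "vec set"
  assumes "S \<subseteq> pg_points"
    and "card S = 9"
    and "strong_blocking_set S"
    and "P \<in> S"
  shows "card {L. is_line L \<and> L \<subseteq> S \<and> P \<in> L} = 2"
proof -
  define T where "T = pg_points - S"
  have fin: "finite (A :: vec set)" for A by simp
  have cT: "card T = 6" unfolding T_def using assms(1,2) card_pg
    by (simp add: card_Diff_subset)
  have Tpg: "T \<subseteq> pg_points" unfolding T_def by blast
  have Tnz: "x \<in> T \<Longrightarrow> x \<noteq> vzero" for x using Tpg unfolding pg_points_def by blast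
  have PT: "P \<notin> T" unfolding T_def using assms(4) by blast
  have Pnz: "P \<noteq> vzero" using assms(1,4) unfolding pg_points_def by blast
  have inS: "x \<in> S \<longleftrightarrow> x \<noteq> vzero \<and> x \<notin> T" for x
    using assms(1) unfolding T_def pg_points_def by blast
  have sid: "vadd a b \<noteq> vadd c d"
    if "a \<in> T" "b \<in> T" "c \<in> T" "d \<in> T" "a \<noteq> b" "a \<noteq> c" "a \<noteq> d" "b \<noteq> c" "b \<noteq> d" "c \<noteq> d"
    for a b c d
  proof
    assume "vadd a b = vadd c d"
    then show False using sidon[OF assms(3), of a b c d] that Tnz
      unfolding T_def by blast
  qed
  have "\<exists>t. t \<in> T \<and> vadd P t \<in> T"
  proof (rule ccontr)
    assume no: "\<not> (\<exists>t. t \<in> T \<and> vadd P t \<in> T)"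
    define A where "A = Sigma T (\<lambda>x. T - {x})"
    define F where "F y = {q \<in> A. vadd (fst q) (snd q) = y}" for y
    have cA: "card A = 30" unfolding A_def using cT
      by (simp add: card_Diff_singleton)
    have sub: "A \<subseteq> (\<Union>y \<in> pg_points - {P}. F y)"
    proof
      fix q assume q: "q \<in> A"
      obtain x z where xz: "q = (x, z)" using surj_pair[of q] by blast
      have "x \<in> T" "z \<in> T" "x \<noteq> z" using q xz unfolding A_def by auto
      then have "vadd x z \<noteq> vzero" "vadd x z \<noteq> P"
        using no by (auto, metis vac vadd_self2)
      then show "q \<in> (\<Union>y \<in> pg_points - {P}. F y)" using q xz
        unfolding F_def pg_points_def by auto
    qed
    have cF: "card (F y) \<le> 2" for y
    proof (cases "F y = {}")
      case True then show ?thesis by simp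
    next
      case False
      then obtain x z where xz: "(x, z) \<in> F y" by auto
      have "F y \<subseteq> {(x, z), (z, x)}"
      proof
        fix q assume q: "q \<in> F y"
        obtain x' z' where q': "q = (x', z')" using surj_pair[of q] by blast
        have h: "x \<in> T" "z \<in> T" "x \<noteq> z" "x' \<in> T" "z' \<in> T" "x' \<noteq> z'"
          "vadd x z = vadd x' z'"
          using q q' xz unfolding F_def A_def by auto
        show "q \<in> {(x, z), (z, x)}"
        proof (cases "x' = x \<or> x' = z \<or> z' = x \<or> z' = z")
          case True then show ?thesis using h q'
            by (auto simp: vadd_comm[of z x])
        next
          case False then show ?thesis using h sid[of x z x' z'] by auto
        qed
      qed
      then have "card (F y) \<le> card {(x, z), (z, x)}" by (intro card_mono) auto
      also have "\<dots> \<le> 2" by (rule card2)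
      finally show ?thesis .
    qed
    have "card A \<le> card (\<Union>y \<in> pg_points - {P}. F y)" using sub by (intro card_mono) auto
    also have "\<dots> \<le> (\<Sum>y \<in> pg_points - {P}. card (F y))" by (rule card_UN_le) simp
    also have "\<dots> \<le> card (pg_points - {P}) * 2" using sum_bounded_above[of "pg_points - {P}" "\<lambda>y. card (F y)" 2] cF by simp
    also have "\<dots> = 28" using card_pg assms(1,4) by (simp add: card_Diff_singleton subsetD)
    finally show False using cA by simp
  qed
  then obtain t where t: "t \<in> T" "vadd P t \<in> T" by blast
  have uniq: "s = t \<or> s = vadd P t" if "s \<in> T" "vadd P s \<in> T" for s
  proof (rule ccontr)
    assume ns: "\<not> (s = t \<or> s = vadd P t)"
    have "vadd t (vadd P t) = vadd s (vadd P s)" by (metis vac vadd_self2)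
    moreover have "vadd t (vadd P t) \<noteq> vadd s (vadd P s)"
    proof -
      have d1: "t \<noteq> vadd P s" using ns by (metis vadd_self2)
      show ?thesis by (rule sid[of t "vadd P t" s "vadd P s"]) (use ns Pnz that t d1 in auto)
    qed
    ultimately show False by simp
  qed
  have I: "T \<inter> vadd P ` T = {t, vadd P t}"
  proof
    show "T \<inter> vadd P ` T \<subseteq> {t, vadd P t}"
    proof
      fix x assume "x \<in> T \<inter> vadd P ` T"
      then have "x \<in> T" "vadd P x \<in> T" by (simp_all add: img_iff)
      then show "x \<in> {t, vadd P t}" using uniq by blast
    qed
    have "vadd P (vadd P t) = t" by simp
    then show "{t, vadd P t} \<subseteq> T \<inter> vadd P ` T" using t by (simp add: img_iff)
  qed
  have cI: "card (T \<inter> vadd P ` T) = 2" unfolding I using Pnz by simp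
  have injP: "inj_on (vadd P) T" by (simp add: inj_on_def)
  have cPT: "card (vadd P ` T) = 6" using cT card_image[OF injP] by simp
  have cU: "card (T \<union> vadd P ` T) = 10" using card_Un_Int[of T "vadd P ` T"] cI cPT cT by simp
  define Good where "Good = {x. x \<in> S \<and> x \<noteq> P \<and> vadd P x \<in> S}"
  have G: "Good = (pg_points - {P}) - (T \<union> vadd P ` T)"
  proof (rule set_eqI)
    fix x
    show "x \<in> Good \<longleftrightarrow> x \<in> (pg_points - {P}) - (T \<union> vadd P ` T)"
      unfolding Good_def pg_points_def by (simp add: img_iff inS) blast
  qed
  have "T \<union> vadd P ` T \<subseteq> pg_points - {P}"
  proof
    fix x assume "x \<in> T \<union> vadd P ` T"
    then have "x \<in> T \<or> vadd P x \<in> T" by (simp add: img_iff)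
    then have "x \<noteq> vzero" "x \<noteq> P" using Tnz PT by (metis vadd_zero(1) vadd_self)+
    then show "x \<in> pg_points - {P}" unfolding pg_points_def by simp
  qed
  then have cG: "card Good = 4" unfolding G using cU card_pg assms(1,4)
    by (simp add: card_Diff_subset card_Diff_singleton subsetD)
  have Gcl: "vadd P x \<in> Good" if x: "x \<in> Good" for x
  proof -
    have "x \<in> S" "x \<noteq> P" "vadd P x \<in> S" using x unfolding Good_def by simp_all
    moreover have "x \<noteq> vzero" using \<open>x \<in> S\<close> inS by blast
    moreover have "vadd P (vadd P x) = x" by simp
    moreover have "vadd P x \<noteq> P" using \<open>x \<noteq> vzero\<close> by simp
    ultimately show ?thesis unfolding Good_def by simp
  qed
  have Gnz: "x \<in> Good \<Longrightarrow> x \<noteq> vzero \<and> x \<noteq> P" for x unfolding Good_def using inS by blast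
  obtain g1 where g1: "g1 \<in> Good" using cG by (metis card.empty ex_in_conv zero_neq_numeral)
  have g1P: "g1 \<noteq> vadd P g1" using Pnz by simp
  have "card (Good - {g1, vadd P g1}) = 2" using cG g1 Gcl[OF g1] g1P
    by (simp add: card_Diff_subset)
  then obtain g2 where g2: "g2 \<in> Good" "g2 \<noteq> g1" "g2 \<noteq> vadd P g1"
    by (metis DiffE card_2_iff' insertCI)
  have GG: "Good = {g1, vadd P g1, g2, vadd P g2}"
  proof (rule card_seteq[symmetric])
    show "finite Good" by simp
    show "{g1, vadd P g1, g2, vadd P g2} \<subseteq> Good" using g1 g2(1) Gcl by blast
    have "vadd P g2 \<noteq> g1" using g2(3) by (metis vadd_self2)
    moreover have "vadd P g2 \<noteq> vadd P g1" "vadd P g2 \<noteq> g2" using g2(2) Pnz by simp_all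
    ultimately show "card Good \<le> card {g1, vadd P g1, g2, vadd P g2}"
      using cG g2 g1P by (simp add: card_insert_if)
  qed
  define L1 where "L1 = {P, g1, vadd P g1}"
  define L2 where "L2 = {P, g2, vadd P g2}"
  have Lset: "{L. is_line L \<and> L \<subseteq> S \<and> P \<in> L} = (\<lambda>x. {P, x, vadd P x}) ` Good"
  proof
    show "(\<lambda>x. {P, x, vadd P x}) ` Good \<subseteq> {L. is_line L \<and> L \<subseteq> S \<and> P \<in> L}"
    proof
      fix L assume "L \<in> (\<lambda>x. {P, x, vadd P x}) ` Good"
      then obtain x where x: "x \<in> Good" "L = {P, x, vadd P x}" by blast
      have xn: "x \<noteq> vzero" "x \<noteq> P" using Gnz[OF x(1)] by simp_all
      have "is_line L" unfolding is_line_def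
        by (rule exI[of _ P], rule exI[of _ x]) (use x(2) Pnz xn in simp)
      moreover have "L \<subseteq> S" using x assms(4) unfolding Good_def by simp
      ultimately show "L \<in> {L. is_line L \<and> L \<subseteq> S \<and> P \<in> L}" using x by simp
    qed
  next
    show "{L. is_line L \<and> L \<subseteq> S \<and> P \<in> L} \<subseteq> (\<lambda>x. {P, x, vadd P x}) ` Good"
    proof
      fix L assume L: "L \<in> {L. is_line L \<and> L \<subseteq> S \<and> P \<in> L}"
      then obtain a b where ab: "a \<noteq> vzero" "b \<noteq> vzero" "a \<noteq> b" "L = {a, b, vadd a b}"
        unfolding is_line_def by blast
      have LS: "L \<subseteq> S" "P \<in> L" using L by simp_all
      have abS: "a \<in> S" "b \<in> S" "vadd a b \<in> S" using LS(1) ab(4) by simp_all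
      show "L \<in> (\<lambda>x. {P, x, vadd P x}) ` Good"
      proof (cases "P = a")
        case True
        have "b \<in> Good" unfolding Good_def using abS ab(3) True by simp
        moreover have "L = {P, b, vadd P b}" by (simp add: ab(4) True)
        ultimately show ?thesis by (rule rev_image_eqI)
      next
        case Pa: False
        show ?thesis
        proof (cases "P = b")
          case True
          have c: "vadd b a = vadd a b" by (rule vadd_comm)
          have "vadd P a \<in> S" using abS(3) c True by metis
          then have "a \<in> Good" unfolding Good_def using abS ab(3) True by simp
          moreover have "L = {P, a, vadd P a}" by (simp add: ab(4) True c insert_commute)
          ultimately show ?thesis by (rule rev_image_eqI)
        next
          case False
          then have Pab: "P = vadd a b" using LS(2) Pa by (simp add: ab(4))
          then have vb: "vadd P a = b" by (metis vac vadd_self2)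
          have "a \<in> Good" unfolding Good_def using abS Pa vb by simp
          moreover have "L = {P, a, vadd P a}"
            by (simp add: ab(4) vb Pab[symmetric] insert_commute)
          ultimately show ?thesis by (rule rev_image_eqI)
        qed
      qed
    qed
  qed
  also have "\<dots> = {L1, L2}"
  proof -
    have e1: "{P, vadd P g1, g1} = L1" unfolding L1_def by (simp add: insert_commute)
    have e2: "{P, vadd P g2, g2} = L2" unfolding L2_def by (simp add: insert_commute)
    show ?thesis
      by (simp only: GG image_insert image_empty vadd_self2 e1 e2 L1_def[symmetric]
          L2_def[symmetric] insert_absorb2)
  qed
  finally have E: "{L. is_line L \<and> L \<subseteq> S \<and> P \<in> L} = {L1, L2}" .
  have "g2 \<noteq> P" using Gnz[OF g2(1)] by simp
  then have "g2 \<notin> L1" using g2(2,3) unfolding L1_def by simp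
  moreover have "g2 \<in> L2" unfolding L2_def by simp
  ultimately have "L1 \<noteq> L2" by blast
  then show ?thesis unfolding E by simp
qed

end
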